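(* Let $A$ be a commutative ring and let $x_0,x_1,\ldots,x_n$ be a path in $\Gamma(A)$. Fix $X\in\mathrm{GL}_2(A)$ with $x_0=\infty\cdot X$. Then there exist unique $a_1,\ldots,a_n\in A$ satisfying $x_i=\infty\cdot E(a_i)E(a_{i-1})\cdots E(a_1)X$ for $i=1,\ldots,n$. Conversely, given $X\in\mathrm{GL}_2(A)$ and $a_1,\ldots,a_n\in A$, setting $x_0:=\infty\cdot X$ and $x_i:=\infty\cdot E(a_i)\cdots E(a_1)X$ for $1\le i\le n$, the sequence $x_0,x_1,\ldots,x_n$ is a path in $\Gamma(A)$.
   Context: A unimodular row over $A$ is $(a,b)\in A^2$ with $aA+bA=A$. $\Gamma(A)$ is the graph whose vertices are classes $[u]$ of unimodular rows modulo multiplication by units, with $\{[u],[v]\}$ an edge iff the matrix with rows $u,v$ lies in $\mathrm{GL}_2(A)$; a path is a sequence of vertices in which consecutive vertices are adjacent. $\mathrm{GL}_2(A)$ acts on vertices on the right by $[u]\cdot M=[uM]$; $\infty=[(1,0)]$. $E(a)=\begin{pmatrix}a&1\\-1&0\end{pmatrix}$. *)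

theory Defs
  imports Main
begin

text \<open>2x2 matrices over a commutative ring: Mat2 a b c d is the matrix with rows (a,b) and (c,d).\<close>
datatype 'a mat2 = Mat2 'a 'a 'a 'a

fun mmul :: "'a::comm_ring_1 mat2 \<Rightarrow> 'a mat2 \<Rightarrow> 'a mat2" where
  "mmul (Mat2 a b c d) (Mat2 e f g h) =
     Mat2 (a*e + b*g) (a*f + b*h) (c*e + d*g) (c*f + d*h)"

definition mat2_one :: "'a::comm_ring_1 mat2" where
  "mat2_one = Mat2 1 0 0 1"

definition GL2 :: "'a::comm_ring_1 mat2 set" where
  "GL2 = {M. \<exists>N. mmul M N = mat2_one \<and> mmul N M = mat2_one}"

definition rows :: "'a \<times> 'a \<Rightarrow> 'a \<times> 'a \<Rightarrow> 'a mat2" where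
  "rows u v = Mat2 (fst u) (snd u) (fst v) (snd v)"

fun vecmat :: "'a::comm_ring_1 \<times> 'a \<Rightarrow> 'a mat2 \<Rightarrow> 'a \<times> 'a" where
  "vecmat (p, q) (Mat2 a b c d) = (p*a + q*c, p*b + q*d)"

definition unimodular :: "'a::comm_ring_1 \<times> 'a \<Rightarrow> bool" where
  "unimodular u \<longleftrightarrow> (\<exists>c d. fst u * c + snd u * d = 1)"

definition vclass :: "'a::comm_ring_1 \<times> 'a \<Rightarrow> ('a \<times> 'a) set" where
  "vclass u = {(e * fst u, e * snd u) | e. e dvd 1}"

definition vertices :: "('a::comm_ring_1 \<times> 'a) set set" where
  "vertices = {vclass u | u. unimodular u}"

definition adjacent :: "('a::comm_ring_1 \<times> 'a) set \<Rightarrow> ('a \<times> 'a) set \<Rightarrow> bool" where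
  "adjacent x y \<longleftrightarrow> (\<exists>u v. unimodular u \<and> unimodular v \<and>
      x = vclass u \<and> y = vclass v \<and> rows u v \<in> GL2)"

definition is_path :: "(nat \<Rightarrow> ('a::comm_ring_1 \<times> 'a) set) \<Rightarrow> nat \<Rightarrow> bool" where
  "is_path x n \<longleftrightarrow> (\<forall>i\<le>n. x i \<in> vertices) \<and> (\<forall>i<n. adjacent (x i) (x (Suc i)))"

definition vact :: "('a::comm_ring_1 \<times> 'a) set \<Rightarrow> 'a mat2 \<Rightarrow> ('a \<times> 'a) set" where
  "vact x M = (\<lambda>u. vecmat u M) ` x"

definition infty :: "('a::comm_ring_1 \<times> 'a) set" where
  "infty = vclass (1, 0)"

definition E :: "'a::comm_ring_1 \<Rightarrow> 'a mat2" where
  "E a = Mat2 a 1 (-1) 0"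

text \<open>Eprod [a1,...,ai] = E(ai) * ... * E(a1).\<close>
definition Eprod :: "'a::comm_ring_1 list \<Rightarrow> 'a mat2" where
  "Eprod as = foldl (\<lambda>M a. mmul (E a) M) mat2_one as"

end

theory Submission
  imports Defs
begin

lemma mmul_assoc: "mmul (mmul A B) C = mmul A (mmul B (C::'a::comm_ring_1 mat2))"
  by (cases A; cases B; cases C) (simp add: algebra_simps)

lemma mmul_one_left[simp]: "mmul mat2_one (A::'a::comm_ring_1 mat2) = A"
  by (cases A) (simp add: mat2_one_def)

lemma unit_mult2: "(a::'a::comm_ring_1) dvd 1 \<Longrightarrow> b dvd 1 \<Longrightarrow> a * b dvd 1"
  using mult_dvd_mono[of a 1 b 1] by simp

fun det2 :: "'a::comm_ring_1 mat2 \<Rightarrow> 'a" where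
  "det2 (Mat2 a b c d) = a*d - b*c"

fun row1 :: "'a mat2 \<Rightarrow> 'a \<times> 'a" where
  "row1 (Mat2 a b c d) = (a, b)"

lemma det2_mmul: "det2 (mmul A B) = det2 A * det2 (B::'a::comm_ring_1 mat2)"
  by (cases A; cases B) (simp add: algebra_simps)

lemma GL2_iff: "(M::'a::comm_ring_1 mat2) \<in> GL2 \<longleftrightarrow> det2 M dvd 1"
proof
  assume "M \<in> GL2"
  then obtain N where "mmul M N = mat2_one" unfolding GL2_def by blast
  then have "det2 M * det2 N = 1" by (metis det2_mmul det2.simps mat2_one_def mult_1 mult_zero_left diff_zero)
  then show "det2 M dvd 1" by (metis dvd_triv_left)
next
  assume "det2 M dvd 1"
  then obtain k where k: "1 = det2 M * k" by (auto simp: dvd_def)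
  obtain a b c d where M: "M = Mat2 a b c d" by (cases M)
  have k': "(a*d - b*c) * k = 1" using k M by simp
  define N where "N = Mat2 (d*k) (-b*k) (-c*k) (a*k)"
  have e1: "a*(d*k) + b*(-c*k) = 1" "c*(-b*k) + d*(a*k) = 1"
           "d*k*a + (-b*k)*c = 1" "(-c*k)*b + a*k*d = 1"
    using k' by (simp_all add: algebra_simps)
  have "mmul M N = mat2_one" "mmul N M = mat2_one"
    unfolding M N_def mat2_one_def using e1 by (simp_all add: algebra_simps)
  then show "M \<in> GL2" unfolding GL2_def by blast
qed

lemma vecmat_mmul: "vecmat (vecmat u M) N = vecmat u (mmul M (N::'a::comm_ring_1 mat2))"
  by (cases u; cases M; cases N) (simp add: algebra_simps)

lemma vecmat_one[simp]: "vecmat u (mat2_one::'a::comm_ring_1 mat2) = u"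
  by (cases u) (simp add: mat2_one_def)

lemma vecmat_inj:
  assumes "(M::'a::comm_ring_1 mat2) \<in> GL2" "vecmat u M = vecmat v M" shows "u = v"
proof -
  obtain N where "mmul M N = mat2_one" using assms(1) unfolding GL2_def by blast
  then show ?thesis using assms(2) by (metis vecmat_mmul vecmat_one)
qed

lemma vclass_img: "vclass u = (\<lambda>e. (e * fst u, e * snd u)) ` {e. e dvd 1}"
  by (auto simp: vclass_def)

lemma vact_vclass: "vact (vclass u) M = vclass (vecmat u (M::'a::comm_ring_1 mat2))"
proof -
  have "vecmat (e * fst u, e * snd u) M = (e * fst (vecmat u M), e * snd (vecmat u M))" for e
    by (cases u; cases M) (simp add: algebra_simps)
  then show ?thesis unfolding vact_def vclass_img image_image by simp
qed

lemma vecmat_10: "vecmat (1,0) M = row1 (M::'a::comm_ring_1 mat2)"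
  by (cases M) simp

lemma infty_act: "vact infty M = vclass (row1 (M::'a::comm_ring_1 mat2))"
  unfolding infty_def by (simp add: vact_vclass vecmat_10)

lemma vclass_self: "u \<in> vclass (u::'a::comm_ring_1 \<times> 'a)"
  unfolding vclass_def by (rule CollectI, rule exI[of _ 1]) simp

lemma vclass_eq: "vclass u = vclass (v::'a::comm_ring_1 \<times> 'a) \<Longrightarrow> \<exists>e. e dvd 1 \<and> v = (e * fst u, e * snd u)"
  using vclass_self[of v] unfolding vclass_def by auto

lemma vclass_unit:
  assumes "(e::'a::comm_ring_1) dvd 1" shows "vclass (e*p, e*q) = vclass (p,q)"
proof -
  obtain f where f: "1 = e * f" using assms by (auto simp: dvd_def)
  show ?thesis unfolding vclass_def
  proof (auto)
    fix g :: 'a assume "g dvd 1"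
    then show "\<exists>h. g * (e * p) = h * p \<and> g * (e * q) = h * q \<and> h dvd 1"
      using assms unit_mult2[of g e] by (intro exI[of _ "g*e"]) (simp add: algebra_simps)
  next
    fix g :: 'a assume g: "g dvd 1"
    have "g * f dvd 1" using g f by (metis dvd_triv_right unit_mult2)
    moreover have "g * p = g * f * (e * p)" "g * q = g * f * (e * q)"
      using f by (simp_all add: algebra_simps) (metis mult.assoc mult.commute mult_1_right)+
    ultimately show "\<exists>h. g * p = h * (e * p) \<and> g * q = h * (e * q) \<and> h dvd 1" by blast
  qed
qed

lemma Eprod_snoc: "Eprod (as @ [a]) = mmul (E a) (Eprod as)"
  by (simp add: Eprod_def)

lemma Eprod_nil[simp]: "Eprod [] = mat2_one"
  by (simp add: Eprod_def)

lemma E_GL2: "E a \<in> GL2"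
  by (simp add: GL2_iff E_def)

lemma GL2_mmul: "A \<in> GL2 \<Longrightarrow> B \<in> GL2 \<Longrightarrow> mmul A (B::'a::comm_ring_1 mat2) \<in> GL2"
  by (simp add: GL2_iff det2_mmul unit_mult2)

lemma Eprod_GL2: "Eprod as \<in> GL2"
proof (induction as rule: rev_induct)
  case Nil then show ?case by (simp add: GL2_iff mat2_one_def)
next
  case (snoc a as) then show ?case by (simp add: Eprod_snoc GL2_mmul E_GL2)
qed

lemma step_exists:
  assumes M: "(M::'a::comm_ring_1 mat2) \<in> GL2" and adj: "adjacent (vclass (row1 M)) y"
  shows "\<exists>a. y = vclass (row1 (mmul (E a) M))"
proof -
  obtain r1 r2 w1 w2 where Md: "M = Mat2 r1 r2 w1 w2" by (cases M)
  obtain u v where uv: "vclass u = vclass (r1,r2)" "y = vclass v" "rows u v \<in> GL2"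
    using adj Md unfolding adjacent_def by auto
  obtain e where e: "e dvd 1" "u = (e*r1, e*r2)" using vclass_eq[OF uv(1)[symmetric]] by auto
  obtain v1 v2 where v: "v = (v1, v2)" by (cases v)
  have "det2 (rows u v) = e * (r1*v2 - r2*v1)" by (simp add: e v rows_def algebra_simps)
  then have "e * (r1*v2 - r2*v1) dvd 1" using uv(3) GL2_iff by metis
  then have g: "(r1*v2 - r2*v1) dvd 1" using dvd_mult_right by blast
  have "(r1*w2 - r2*w1) dvd 1" using M Md by (simp add: GL2_iff)
  then obtain k where k: "1 = (r1*w2 - r2*w1) * k" by (auto simp: dvd_def)
  have kd: "k dvd 1" using k by (metis dvd_triv_right)
  define \<beta> where "\<beta> = k * (r1*v2 - r2*v1)"
  define \<alpha> where "\<alpha> = k * (v1*w2 - v2*w1)"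
  have bu: "\<beta> dvd 1" unfolding \<beta>_def using kd g by (rule unit_mult2)
  then obtain \<beta>' where b': "1 = \<beta> * \<beta>'" by (auto simp: dvd_def)
  define a where "a = \<beta>' * \<alpha>"
  have ba: "\<beta> * a = \<alpha>" unfolding a_def using b' by (metis mult.assoc mult_1)
  have "\<alpha>*r1 + \<beta>*w1 = v1*((r1*w2 - r2*w1) * k)" unfolding \<alpha>_def \<beta>_def by (simp add: algebra_simps)
  then have h1: "\<alpha>*r1 + \<beta>*w1 = v1" using k by simp
  have "\<alpha>*r2 + \<beta>*w2 = v2*((r1*w2 - r2*w1) * k)" unfolding \<alpha>_def \<beta>_def by (simp add: algebra_simps)
  then have h2: "\<alpha>*r2 + \<beta>*w2 = v2" using k by simp
  have "\<beta> * (a*r1 + w1) = (\<beta>*a)*r1 + \<beta>*w1" "\<beta> * (a*r2 + w2) = (\<beta>*a)*r2 + \<beta>*w2"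
    by (simp_all add: algebra_simps)
  then have "v = (\<beta> * (a*r1 + w1), \<beta> * (a*r2 + w2))"
    using v h1 h2 ba by simp
  then have "y = vclass (a*r1 + w1, a*r2 + w2)" using uv(2) vclass_unit[OF bu] by simp
  then show ?thesis by (intro exI[of _ a]) (simp add: Md E_def)
qed

lemma step_unique:
  assumes M: "(M::'a::comm_ring_1 mat2) \<in> GL2"
    and eq: "vclass (row1 (mmul (E a) M)) = vclass (row1 (mmul (E b) M))"
  shows "a = b"
proof -
  obtain r1 r2 w1 w2 where Md: "M = Mat2 r1 r2 w1 w2" by (cases M)
  have "vclass (a*r1 + w1, a*r2 + w2) = vclass (b*r1 + w1, b*r2 + w2)" using eq Md by (simp add: E_def)
  from vclass_eq[OF this] obtain e where e0: "(b*r1 + w1, b*r2 + w2) = (e * (a*r1 + w1), e * (a*r2 + w2))"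
    by auto
  then have e: "b*r1 + w1 = e * (a*r1 + w1)" "b*r2 + w2 = e * (a*r2 + w2)" by simp_all
  have "b*r1 + w1 - e * (a*r1 + w1) = 0" "b*r2 + w2 - e * (a*r2 + w2) = 0" using e by simp_all
  then have "vecmat (b - e*a, 1 - e) M = vecmat (0,0) M" unfolding Md by (simp add: algebra_simps)
  then have "(b - e*a, 1 - e) = (0,0)" using vecmat_inj[OF M] by blast
  then show ?thesis by simp
qed

lemma exist:
  assumes "is_path x n" "(X::'a::comm_ring_1 mat2) \<in> GL2" "x 0 = vact infty X"
  shows "\<exists>as. length as = n \<and> (\<forall>i\<le>n. x i = vclass (row1 (mmul (Eprod (take i as)) X)))"
  using assms(1)
proof (induction n)
  case 0
  then show ?case using assms(3) by (simp add: infty_act)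
next
  case (Suc n)
  have pn: "is_path x n" using Suc.prems unfolding is_path_def by auto
  obtain as where as: "length as = n" "\<forall>i\<le>n. x i = vclass (row1 (mmul (Eprod (take i as)) X))"
    using Suc.IH[OF pn] by blast
  define M where "M = mmul (Eprod as) X"
  have MG: "M \<in> GL2" unfolding M_def using Eprod_GL2 assms(2) GL2_mmul by blast
  have xn: "x n = vclass (row1 M)" using as unfolding M_def by auto
  have "adjacent (x n) (x (Suc n))" using Suc.prems unfolding is_path_def by auto
  then obtain a where a: "x (Suc n) = vclass (row1 (mmul (E a) M))" using step_exists[OF MG] xn by metis
  show ?case
  proof (intro exI[of _ "as @ [a]"] conjI allI impI)
    show "length (as @ [a]) = Suc n" using as by simp
    fix i assume "i \<le> Suc n"
    then consider "i \<le> n" | "i = Suc n" by linarith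
    then show "x i = vclass (row1 (mmul (Eprod (take i (as @ [a]))) X))"
    proof cases
      case 1 then show ?thesis using as by simp
    next
      case 2 then show ?thesis using as a by (simp add: Eprod_snoc M_def mmul_assoc)
    qed
  qed
qed

lemma uniq:
  assumes X: "(X::'a::comm_ring_1 mat2) \<in> GL2" and l: "length as = n" "length bs = n"
    and ha: "\<forall>i\<in>{1..n}. vclass (row1 (mmul (Eprod (take i as)) X)) = vclass (row1 (mmul (Eprod (take i bs)) X))"
  shows "as = bs"
proof -
  have "\<forall>j<i. as ! j = bs ! j" if "i \<le> n" for i
    using that
  proof (induction i)
    case 0 then show ?case by simp
  next
    case (Suc i)
    then have IH: "\<forall>j<i. as ! j = bs ! j" by simp
    have tk: "take i as = take i bs" using IH l Suc.prems by (intro nth_equalityI) auto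
    define M where "M = mmul (Eprod (take i as)) X"
    have MG: "M \<in> GL2" unfolding M_def using Eprod_GL2 X GL2_mmul by blast
    have ia: "i < length as" "i < length bs" using Suc.prems l by auto
    have "vclass (row1 (mmul (Eprod (take (Suc i) as)) X)) = vclass (row1 (mmul (Eprod (take (Suc i) bs)) X))"
      using ha Suc.prems by auto
    then have "vclass (row1 (mmul (E (as!i)) M)) = vclass (row1 (mmul (E (bs!i)) M))"
      using ia tk by (simp add: take_Suc_conv_app_nth Eprod_snoc M_def mmul_assoc)
    then have "as ! i = bs ! i" using step_unique[OF MG] by blast
    then show ?case using IH less_Suc_eq by auto
  qed
  then show ?thesis using l by (intro nth_equalityI) auto
qed

lemma row1_unimodular: "(M::'a::comm_ring_1 mat2) \<in> GL2 \<Longrightarrow> unimodular (row1 M)"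
proof -
  assume "M \<in> GL2"
  then obtain N where N: "mmul M N = mat2_one" unfolding GL2_def by blast
  obtain a b c d where M: "M = Mat2 a b c d" by (cases M)
  obtain p q r s where Nd: "N = Mat2 p q r s" by (cases N)
  have "a*p + b*r = 1" using N M Nd by (simp add: mat2_one_def)
  then show ?thesis unfolding unimodular_def M by auto
qed

lemma converse:
  assumes X: "(X::'a::comm_ring_1 mat2) \<in> GL2" and l: "length as = n"
  shows "is_path (\<lambda>i. if i = 0 then vact infty X
                        else vact infty (mmul (Eprod (take i as)) X)) n"
proof -
  define Mf where "Mf i = mmul (Eprod (take i as)) X" for i
  have MG: "Mf i \<in> GL2" for i unfolding Mf_def using Eprod_GL2 X GL2_mmul by blast
  have xe: "(\<lambda>i. if i = 0 then vact infty X else vact infty (mmul (Eprod (take i as)) X))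
        = (\<lambda>i. vclass (row1 (Mf i)))" unfolding Mf_def by (rule ext) (simp add: infty_act)
  have V: "vclass (row1 (Mf i)) \<in> vertices" for i
    unfolding vertices_def using row1_unimodular[OF MG] by blast
  have A: "adjacent (vclass (row1 (Mf i))) (vclass (row1 (Mf (Suc i))))" if "i < n" for i
  proof -
    have ms: "Mf (Suc i) = mmul (E (as!i)) (Mf i)"
      using that l by (simp add: Mf_def take_Suc_conv_app_nth Eprod_snoc mmul_assoc)
    obtain r1 r2 w1 w2 where Md: "Mf i = Mat2 r1 r2 w1 w2" by (cases "Mf i")
    have "rows (row1 (Mf i)) (row1 (Mf (Suc i))) = mmul (Mat2 1 0 (as!i) 1) (Mf i)"
      unfolding ms Md by (simp add: rows_def E_def)
    then have "rows (row1 (Mf i)) (row1 (Mf (Suc i))) \<in> GL2"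
      using GL2_mmul[OF _ MG[of i]] by (simp add: GL2_iff)
    then show ?thesis unfolding adjacent_def using row1_unimodular[OF MG] by blast
  qed
  show ?thesis unfolding xe is_path_def using V A by auto
qed

theorem lemma3p1:
  fixes x :: "nat \<Rightarrow> ('a::comm_ring_1 \<times> 'a) set" and n :: nat and X :: "'a mat2"
  shows "(is_path x n \<and> X \<in> GL2 \<and> x 0 = vact infty X \<longrightarrow>
           (\<exists>!as :: 'a list. length as = n \<and>
              (\<forall>i\<in>{1..n}. x i = vact infty (mmul (Eprod (take i as)) X))))
       \<and> (\<forall>as :: 'a list. X \<in> GL2 \<and> length as = n \<longrightarrow>
           is_path (\<lambda>i. if i = 0 then vact infty X
                        else vact infty (mmul (Eprod (take i as)) X)) n)"
proof (intro conjI impI allI)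
  assume h: "is_path x n \<and> X \<in> GL2 \<and> x 0 = vact infty X"
  obtain as where as: "length as = n" "\<forall>i\<le>n. x i = vclass (row1 (mmul (Eprod (take i as)) X))"
    using exist h by blast
  show "\<exists>!as :: 'a list. length as = n \<and>
              (\<forall>i\<in>{1..n}. x i = vact infty (mmul (Eprod (take i as)) X))"
  proof (rule ex1I[of _ as])
    show "length as = n \<and> (\<forall>i\<in>{1..n}. x i = vact infty (mmul (Eprod (take i as)) X))"
      using as by (auto simp: infty_act)
  next
    fix bs assume b: "length bs = n \<and> (\<forall>i\<in>{1..n}. x i = vact infty (mmul (Eprod (take i bs)) X))"
    show "bs = as"
      by (rule uniq[OF _ _ _]) (use h b as in \<open>auto simp: infty_act\<close>)
  qed
next
  fix as :: "'a list"
  assume "X \<in> GL2 \<and> length as = n"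
  then show "is_path (\<lambda>i. if i = 0 then vact infty X
                        else vact infty (mmul (Eprod (take i as)) X)) n"
    using converse by blast
qed

end
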